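(* Let $\mathsf P_1,\mathsf P_2\subseteq\mathcal G_{s,t}\times\mathbb N$ be parameterized problems with $\mathsf P_1\le_{\mathrm{LOCAL}}$ Multicolored Independent Set and $\mathsf P_2\le_{\mathrm{LOCAL}}$ Multicolored Independent Set. Then $\mathsf P_1\cup\mathsf P_2\le_{\mathrm{LOCAL}}$ Multicolored Independent Set.
   Context: LOCAL model: network = finite connected undirected graph $G$, $n=|V(G)|$, unique $O(\log n)$-bit identifiers; nodes initially know their identifier, neighbours' identifiers, input labels and the parameter; synchronous rounds, unbounded messages to neighbours, arbitrary local computation. $\mathcal G_{s,t}$: finite connected graphs with unary predicates $P_1..P_s$ and binary predicates $E_1..E_t$; a parameterized problem is $\mathsf P\subseteq\mathcal G_{s,t}\times\mathbb N$. LOCAL reductions: a LOCAL algorithm turning $(G,k)$ into $(G',k')$ ($G'$ connected), represented by $\nu:V(G')\to V(G)$ and $\eta$ mapping each $\{x,y\}\in E(G')$ to a path of $G$ between $\nu(x),\nu(y)$ (stored at the nodes; all nodes know $k'$). $\mathsf P\le_{\mathrm{LOCAL}}\mathsf Q$ if for computable $s,r,t,p$ there is such a reduction with $|V(G')|\le|V(G)|^{s(k)}$, all paths of length $\le r(k)$, $\le t(k)$ rounds, $k'\le p(k)$, and $(G,k)\in\mathsf P\iff(G',k')\in\mathsf Q$ (congestion unbounded). Multicolored Independent Set: instance $k\ge1$ and $G\in\mathcal G_{k,1}$ (binary predicate = edge relation), each vertex in at most one of $P_1..P_k$ (vertices may be uncoloured); yes iff there are pairwise non-adjacent $v_1\in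 P_1,..,v_k\in P_k$; parameter $k$. *)

theory Defs
  imports Main
begin

datatype recf = Zero | Succ | Proj nat | Comp recf "recf list" | Prim recf recf | Mn recf

inductive eval_recf :: "recf \<Rightarrow> nat list \<Rightarrow> nat \<Rightarrow> bool" where
  ev_zero: "eval_recf Zero xs 0"
| ev_succ: "eval_recf Succ (x # xs) (Suc x)"
| ev_proj: "i < length xs \<Longrightarrow> eval_recf (Proj i) xs (xs ! i)"
| ev_comp: "list_all2 (\<lambda>g y. eval_recf g xs y) gs ys \<Longrightarrow> eval_recf f ys z
             \<Longrightarrow> eval_recf (Comp f gs) xs z"
| ev_prim0: "eval_recf f xs y \<Longrightarrow> eval_recf (Prim f g) (0 # xs) y"
| ev_primS: "eval_recf (Prim f g) (n # xs) y \<Longrightarrow> eval_recf g (n # y # xs) z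
             \<Longrightarrow> eval_recf (Prim f g) (Suc n # xs) z"
| ev_mn: "eval_recf f (n # xs) 0 \<Longrightarrow> (\<forall>m<n. \<exists>y. eval_recf f (m # xs) y \<and> y \<noteq> 0)
             \<Longrightarrow> eval_recf (Mn f) xs n"

definition computable :: "(nat \<Rightarrow> nat) \<Rightarrow> bool" where
  "computable f \<longleftrightarrow> (\<exists>c. \<forall>n. eval_recf c [n] (f n))"

text \<open>Vertices are natural numbers; the vertex name doubles as the node's unique identifier.
  unary G ! i is the predicate P_{i+1}, binary G ! j is E_{j+1}.\<close>

record lgraph =
  verts  :: "nat set"
  edges  :: "(nat \<times> nat) set"
  unary  :: "nat set list"
  binary :: "(nat \<times> nat) set list"

definition connected_graph :: "nat set \<Rightarrow> (nat \<times> nat) set \<Rightarrow> bool" where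
  "connected_graph V E \<longleftrightarrow> V \<noteq> {} \<and> finite V \<and> E \<subseteq> V \<times> V \<and> sym E \<and> irrefl E
      \<and> (\<forall>u\<in>V. \<forall>w\<in>V. (u, w) \<in> E\<^sup>*)"

definition in_G :: "nat \<Rightarrow> nat \<Rightarrow> lgraph \<Rightarrow> bool" where
  "in_G s t G \<longleftrightarrow> connected_graph (verts G) (edges G)
      \<and> length (unary G) = s \<and> (\<forall>P\<in>set (unary G). P \<subseteq> verts G)
      \<and> length (binary G) = t \<and> (\<forall>B\<in>set (binary G). B \<subseteq> verts G \<times> verts G)"

type_synonym problem = "(lgraph \<times> nat) set"

definition inst_MIS :: "lgraph \<Rightarrow> nat \<Rightarrow> bool" where
  "inst_MIS G k \<longleftrightarrow> k \<ge> 1 \<and> in_G k 1 G \<and> binary G ! 0 = edges G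
      \<and> (\<forall>i<k. \<forall>j<k. i \<noteq> j \<longrightarrow> unary G ! i \<inter> unary G ! j = {})"

definition MIS :: problem where
  "MIS = {(G, k). inst_MIS G k \<and>
      (\<exists>f :: nat \<Rightarrow> nat. (\<forall>i<k. f i \<in> unary G ! i)
         \<and> (\<forall>i<k. \<forall>j<k. i \<noteq> j \<longrightarrow> (f i, f j) \<notin> edges G))}"

definition nbrs :: "lgraph \<Rightarrow> nat \<Rightarrow> nat set" where
  "nbrs G u = {w. (u, w) \<in> edges G}"

text \<open>Initial knowledge of node u: its identifier, its neighbours' identifiers, its input labels
  (unary labels and all binary-predicate tuples it takes part in). The parameter k is common.\<close>
definition init_info :: "lgraph \<Rightarrow> nat \<Rightarrow> nat \<times> nat set \<times> nat set \<times> (nat \<times> nat) set \<times> (nat \<times> nat) set" where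
  "init_info G u = (u, nbrs G u,
      {i. i < length (unary G) \<and> u \<in> unary G ! i},
      {(i, w). i < length (binary G) \<and> (u, w) \<in> binary G ! i},
      {(i, w). i < length (binary G) \<and> (w, u) \<in> binary G ! i})"

definition gball :: "lgraph \<Rightarrow> nat \<Rightarrow> nat \<Rightarrow> nat set" where
  "gball G v r = {u. \<exists>n\<le>r. (v, u) \<in> edges G ^^ n}"

text \<open>Two networks look the same to v for r rounds iff the radius-r balls around v coincide and
  every node in the ball has the same initial knowledge (full-information view).\<close>
definition same_view :: "lgraph \<Rightarrow> lgraph \<Rightarrow> nat \<Rightarrow> nat \<Rightarrow> bool" where
  "same_view G1 G2 v r \<longleftrightarrow> gball G1 v r = gball G2 v r
      \<and> (\<forall>u \<in> gball G1 v r. init_info G1 u = init_info G2 u)"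

text \<open>Output of a node v: the common k', the vertices x of G' with nu(x) = v, their unary labels
  (pairs (x,i): x in P'_{i+1}), the edges (x,y) of G' incident to hosted x together with the
  path eta({x,y}) oriented from nu(x) to nu(y), and binary labels (i,x,y): (x,y) in E'_{i+1}.\<close>
record nodeout =
  out_k   :: nat
  out_ns  :: nat
  out_nt  :: nat
  hosted  :: "nat set"
  ulabs   :: "(nat \<times> nat) set"
  oedges  :: "(nat \<times> nat \<times> nat list) set"
  blabs   :: "(nat \<times> nat \<times> nat) set"

definition gpath :: "lgraph \<Rightarrow> nat list \<Rightarrow> nat \<Rightarrow> nat \<Rightarrow> bool" where
  "gpath G p a b \<longleftrightarrow> p \<noteq> [] \<and> hd p = a \<and> last p = b \<and> distinct p \<and> set p \<subseteq> verts G
      \<and> (\<forall>i < length p - 1. (p ! i, p ! Suc i) \<in> edges G)"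

definition out_root :: "lgraph \<Rightarrow> (nat \<Rightarrow> nodeout) \<Rightarrow> nodeout" where
  "out_root G Out = Out (SOME v. v \<in> verts G)"

definition assemble :: "lgraph \<Rightarrow> (nat \<Rightarrow> nodeout) \<Rightarrow> lgraph" where
  "assemble G Out =
     \<lparr> verts = (\<Union>v\<in>verts G. hosted (Out v)),
       edges = {(x, y). \<exists>v\<in>verts G. \<exists>p. (x, y, p) \<in> oedges (Out v)},
       unary = map (\<lambda>i. {x. \<exists>v\<in>verts G. (x, i) \<in> ulabs (Out v)}) [0..<out_ns (out_root G Out)],
       binary = map (\<lambda>i. {(x, y). \<exists>v\<in>verts G. (i, x, y) \<in> blabs (Out v)}) [0..<out_nt (out_root G Out)] \<rparr>"

definition red_output_ok ::
  "lgraph \<Rightarrow> (nat \<Rightarrow> nodeout) \<Rightarrow> nat \<Rightarrow> nat \<Rightarrow> nat \<Rightarrow> (lgraph \<Rightarrow> nat \<Rightarrow> bool) \<Rightarrow> bool" where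
  "red_output_ok G Out szexp rlen pbound instQ \<longleftrightarrow>
     (let V = verts G; R = out_root G Out; G' = assemble G Out in
       (\<forall>v\<in>V. out_k (Out v) = out_k R \<and> out_ns (Out v) = out_ns R \<and> out_nt (Out v) = out_nt R)
     \<and> (\<forall>v\<in>V. \<forall>w\<in>V. v \<noteq> w \<longrightarrow> hosted (Out v) \<inter> hosted (Out w) = {})
     \<and> (\<forall>v\<in>V. \<forall>(x, i) \<in> ulabs (Out v). x \<in> hosted (Out v) \<and> i < out_ns R)
     \<and> (\<forall>v\<in>V. \<forall>(i, x, y) \<in> blabs (Out v). x \<in> hosted (Out v) \<and> y \<in> verts G' \<and> i < out_nt R)
     \<and> (\<forall>v\<in>V. \<forall>(x, y, p) \<in> oedges (Out v).
           x \<in> hosted (Out v) \<and> length p \<le> Suc rlen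
           \<and> (\<forall>q. (x, y, q) \<in> oedges (Out v) \<longrightarrow> q = p)
           \<and> (\<exists>w\<in>V. y \<in> hosted (Out w) \<and> (y, x, rev p) \<in> oedges (Out w) \<and> gpath G p v w))
     \<and> card (verts G') \<le> card V ^ szexp
     \<and> out_k R \<le> pbound
     \<and> instQ G' (out_k R))"

text \<open>A is the
  algorithm: A G k v is the output of node v on input (G,k); locality in rd(k) rounds means this
  output depends only on v's rd(k)-round view.\<close>
definition local_reduction :: "nat \<Rightarrow> nat \<Rightarrow> problem \<Rightarrow> (lgraph \<Rightarrow> nat \<Rightarrow> bool) \<Rightarrow> problem \<Rightarrow> bool" where
  "local_reduction s t P instQ Q \<longleftrightarrow>
     (\<exists>sz r rd p. computable sz \<and> computable r \<and> computable rd \<and> computable p \<and>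
       (\<exists>A :: lgraph \<Rightarrow> nat \<Rightarrow> nat \<Rightarrow> nodeout.
          (\<forall>G1 G2 k v. in_G s t G1 \<and> in_G s t G2 \<and> v \<in> verts G1 \<and> same_view G1 G2 v (rd k)
               \<longrightarrow> A G1 k v = A G2 k v)
        \<and> (\<forall>G k. in_G s t G \<longrightarrow>
               red_output_ok G (A G k) (sz k) (r k) (p k) instQ
             \<and> ((G, k) \<in> P \<longleftrightarrow> (assemble G (A G k), out_k (out_root G (A G k))) \<in> Q))))"

abbreviation le_LOCAL_MIS :: "nat \<Rightarrow> nat \<Rightarrow> problem \<Rightarrow> bool" where
  "le_LOCAL_MIS s t P \<equiv> local_reduction s t P inst_MIS MIS"

end

theory Submission
  imports Defs "HOL-Library.Nat_Bijection"
begin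

definition addc :: recf where "addc = Prim (Proj 0) (Comp Succ [Proj 1])"
definition multc :: recf where "multc = Prim Zero (Comp addc [Proj 1, Proj 2])"

lemma eval_addc: "eval_recf addc [a, b] (a + b)"
proof (induction a)
  case 0
  have "eval_recf (Proj 0) [b] ([b] ! 0)" by (rule ev_proj) simp
  then show ?case unfolding addc_def by (auto intro: ev_prim0)
next
  case (Suc a)
  have "eval_recf (Proj 1) [a, a + b, b] ([a, a + b, b] ! 1)" by (rule ev_proj) simp
  then have "eval_recf (Comp Succ [Proj 1]) [a, a + b, b] (Suc (a + b))"
    by (auto intro!: ev_comp ev_succ)
  with Suc show ?case unfolding addc_def by (auto intro: ev_primS)
qed

lemma eval_multc: "eval_recf multc [a, b] (a * b)"
proof (induction a)
  case 0
  then show ?case unfolding multc_def by (auto intro: ev_prim0 ev_zero)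
next
  case (Suc a)
  have "eval_recf (Proj 1) [a, a * b, b] ([a, a * b, b] ! 1)" by (rule ev_proj) simp
  moreover have "eval_recf (Proj 2) [a, a * b, b] ([a, a * b, b] ! 2)" by (rule ev_proj) simp
  ultimately have "eval_recf (Comp addc [Proj 1, Proj 2]) [a, a * b, b] (a * b + b)"
    by (auto intro!: ev_comp eval_addc)
  with Suc show ?case unfolding multc_def by (auto intro: ev_primS simp: add.commute)
qed

lemma computable_add: "computable f \<Longrightarrow> computable g \<Longrightarrow> computable (\<lambda>n. f n + g n)"
  unfolding computable_def
proof (elim exE)
  fix cf cg assume f: "\<forall>n. eval_recf cf [n] (f n)" and g: "\<forall>n. eval_recf cg [n] (g n)"
  have "\<forall>n. eval_recf (Comp addc [cf, cg]) [n] (f n + g n)"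
    using f g by (auto intro!: ev_comp eval_addc)
  then show "\<exists>c. \<forall>n. eval_recf c [n] (f n + g n)" by blast
qed

lemma computable_mult: "computable f \<Longrightarrow> computable g \<Longrightarrow> computable (\<lambda>n. f n * g n)"
  unfolding computable_def
proof (elim exE)
  fix cf cg assume f: "\<forall>n. eval_recf cf [n] (f n)" and g: "\<forall>n. eval_recf cg [n] (g n)"
  have "\<forall>n. eval_recf (Comp multc [cf, cg]) [n] (f n * g n)"
    using f g by (auto intro!: ev_comp eval_multc)
  then show "\<exists>c. \<forall>n. eval_recf c [n] (f n * g n)" by blast
qed

lemma computable_Suc: "computable f \<Longrightarrow> computable (\<lambda>n. Suc (f n))"
  unfolding computable_def
proof (elim exE)
  fix cf assume f: "\<forall>n. eval_recf cf [n] (f n)"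
  have "\<forall>n. eval_recf (Comp Succ [cf]) [n] (Suc (f n))"
    using f by (auto intro!: ev_comp ev_succ)
  then show "\<exists>c. \<forall>n. eval_recf c [n] (Suc (f n))" by blast
qed

definition c0 :: "nat \<Rightarrow> nat" where "c0 v = 3 * v"
definition c1 :: "nat \<Rightarrow> nat \<Rightarrow> nat" where "c1 x j = 3 * prod_encode (x, j) + 1"
definition c2 :: "nat \<Rightarrow> nat \<Rightarrow> nat" where "c2 x j = 3 * prod_encode (x, j) + 2"

lemma mod3_aux: "3 * (a::nat) \<noteq> 3 * b + 1" "3 * (a::nat) \<noteq> 3 * b + 2" "3 * (a::nat) + 1 \<noteq> 3 * b + 2"
  by presburger+

lemma c_eqs[simp]:
  "c0 v = c0 w \<longleftrightarrow> v = w"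
  "c1 x j = c1 y j' \<longleftrightarrow> x = y \<and> j = j'"
  "c2 x j = c2 y j' \<longleftrightarrow> x = y \<and> j = j'"
  "c0 v \<noteq> c1 x j" "c1 x j \<noteq> c0 v"
  "c0 v \<noteq> c2 x j" "c2 x j \<noteq> c0 v"
  "c1 y i \<noteq> c2 x j" "c2 x j \<noteq> c1 y i"
  unfolding c0_def c1_def c2_def using mod3_aux by (simp_all, metis+)

lemma okD:
  assumes ok: "red_output_ok G Ou s r p inst_MIS"
  defines "K \<equiv> out_k (out_root G Ou)"
  shows okD_k: "v \<in> verts G \<Longrightarrow> out_k (Ou v) = K"
  and okD_disj: "v \<in> verts G \<Longrightarrow> w \<in> verts G \<Longrightarrow> v \<noteq> w \<Longrightarrow> hosted (Ou v) \<inter> hosted (Ou w) = {}"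
  and okD_ul: "v \<in> verts G \<Longrightarrow> (x, i) \<in> ulabs (Ou v) \<Longrightarrow> x \<in> hosted (Ou v) \<and> i < K"
  and okD_e: "v \<in> verts G \<Longrightarrow> (x, y, q) \<in> oedges (Ou v) \<Longrightarrow> x \<in> hosted (Ou v) \<and> length q \<le> Suc r
       \<and> (\<forall>q'. (x, y, q') \<in> oedges (Ou v) \<longrightarrow> q' = q)
       \<and> (\<exists>w\<in>verts G. y \<in> hosted (Ou w) \<and> (y, x, rev q) \<in> oedges (Ou w) \<and> gpath G q v w)"
  and okD_card: "card (verts (assemble G Ou)) \<le> card (verts G) ^ s"
  and okD_p: "K \<le> p"
  and okD_inst: "inst_MIS (assemble G Ou) K"
proof -
  let ?R = "out_root G Ou"
  note okU = ok[unfolded red_output_ok_def Let_def]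
  have o1: "\<forall>v\<in>verts G. out_k (Ou v) = out_k ?R \<and> out_ns (Ou v) = out_ns ?R \<and> out_nt (Ou v) = out_nt ?R"
    using okU by (elim conjE) assumption
  have o2: "\<forall>v\<in>verts G. \<forall>w\<in>verts G. v \<noteq> w \<longrightarrow> hosted (Ou v) \<inter> hosted (Ou w) = {}"
    using okU by (elim conjE) assumption
  have o3: "\<forall>v\<in>verts G. \<forall>(x, i) \<in> ulabs (Ou v). x \<in> hosted (Ou v) \<and> i < out_ns ?R"
    using okU by (elim conjE) assumption
  have o5: "\<forall>v\<in>verts G. \<forall>(x, y, p) \<in> oedges (Ou v).
           x \<in> hosted (Ou v) \<and> length p \<le> Suc r
           \<and> (\<forall>q. (x, y, q) \<in> oedges (Ou v) \<longrightarrow> q = p)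
           \<and> (\<exists>w\<in>verts G. y \<in> hosted (Ou w) \<and> (y, x, rev p) \<in> oedges (Ou w) \<and> gpath G p v w)"
    using okU by (elim conjE) assumption
  have o6: "card (verts (assemble G Ou)) \<le> card (verts G) ^ s"
    using okU by (elim conjE) assumption
  have o7: "out_k ?R \<le> p"
    using okU by (elim conjE) assumption
  have o8: "inst_MIS (assemble G Ou) (out_k ?R)"
    using okU by (elim conjE) assumption
  have "length (unary (assemble G Ou)) = out_k ?R"
    using o8 unfolding inst_MIS_def in_G_def by blast
  then have ns: "out_ns ?R = K" unfolding K_def by (simp add: assemble_def)
  show "v \<in> verts G \<Longrightarrow> out_k (Ou v) = K"
    using o1 unfolding K_def by blast
  show "v \<in> verts G \<Longrightarrow> w \<in> verts G \<Longrightarrow> v \<noteq> w \<Longrightarrow> hosted (Ou v) \<inter> hosted (Ou w) = {}"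
    using o2 by blast
  show "v \<in> verts G \<Longrightarrow> (x, i) \<in> ulabs (Ou v) \<Longrightarrow> x \<in> hosted (Ou v) \<and> i < K"
  proof -
    assume a: "v \<in> verts G" "(x, i) \<in> ulabs (Ou v)"
    then have "case (x, i) of (x, i) \<Rightarrow> x \<in> hosted (Ou v) \<and> i < out_ns ?R"
      using o3 by blast
    then show ?thesis using ns by simp
  qed
  show "v \<in> verts G \<Longrightarrow> (x, y, q) \<in> oedges (Ou v) \<Longrightarrow> x \<in> hosted (Ou v) \<and> length q \<le> Suc r
       \<and> (\<forall>q'. (x, y, q') \<in> oedges (Ou v) \<longrightarrow> q' = q)
       \<and> (\<exists>w\<in>verts G. y \<in> hosted (Ou w) \<and> (y, x, rev q) \<in> oedges (Ou w) \<and> gpath G q v w)"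
  proof -
    assume a: "v \<in> verts G" "(x, y, q) \<in> oedges (Ou v)"
    then have "case (x, y, q) of (x, y, p) \<Rightarrow>
           x \<in> hosted (Ou v) \<and> length p \<le> Suc r
           \<and> (\<forall>q. (x, y, q) \<in> oedges (Ou v) \<longrightarrow> q = p)
           \<and> (\<exists>w\<in>verts G. y \<in> hosted (Ou w) \<and> (y, x, rev p) \<in> oedges (Ou w) \<and> gpath G p v w)"
      using o5 by blast
    then show ?thesis by simp
  qed
  show "card (verts (assemble G Ou)) \<le> card (verts G) ^ s" "K \<le> p" "inst_MIS (assemble G Ou) K"
    using o6 o7 o8 unfolding K_def by auto
qed

lemma card_arith:
  fixes n A B k1 k2 p1 p2 s1 s2 :: nat
  assumes n: "2 \<le> n" and A: "A \<le> n ^ s1" and B: "B \<le> n ^ s2" and k1: "k1 \<le> p1" and k2: "k2 \<le> p2"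
  shows "n + A * k2 + B * k1 \<le> n ^ (s1 + s2 + p1 + p2 + 2)"
proof -
  let ?S = "s1 + s2 + 1"
  have n1: "1 \<le> n" using n by simp
  have a: "n \<le> n ^ ?S" using n1 by (metis le_add2 power_increasing power_one_right)
  have b: "A \<le> n ^ ?S" using A power_increasing[OF _ n1, of s1 ?S] by simp
  have c: "B \<le> n ^ ?S" using B power_increasing[OF _ n1, of s2 ?S] by simp
  have "n + A * k2 + B * k1 \<le> n ^ ?S + n ^ ?S * p2 + n ^ ?S * p1"
    using a b c k1 k2 by (intro add_mono mult_mono) auto
  also have "\<dots> = n ^ ?S * (1 + p1 + p2)" by (simp add: algebra_simps)
  also have "\<dots> \<le> n ^ ?S * n ^ (1 + p1 + p2)"
  proof -
    have "1 + p1 + p2 < 2 ^ (1 + p1 + p2)" by (rule less_exp)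
    also have "\<dots> \<le> n ^ (1 + p1 + p2)" using n by (rule power_mono) simp
    finally have "1 + p1 + p2 \<le> n ^ (1 + p1 + p2)" by simp
    then show ?thesis by (rule mult_le_mono2)
  qed
  also have "\<dots> = n ^ (s1 + s2 + p1 + p2 + 2)" by (simp add: power_add[symmetric] add.assoc)
  finally show ?thesis .
qed

definition hostP :: "nodeout \<Rightarrow> nodeout \<Rightarrow> nat \<Rightarrow> nat set" where
  "hostP O1 O2 v = {c0 v} \<union> {c1 x j | x j. x \<in> hosted O1 \<and> j < out_k O2}
                      \<union> {c2 y i | y i. y \<in> hosted O2 \<and> i < out_k O1}"

definition edgP :: "nodeout \<Rightarrow> nodeout \<Rightarrow> nat \<Rightarrow> nat set \<Rightarrow> (nat \<times> nat \<times> nat list) set" where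
  "edgP O1 O2 v N =
     {(c1 x j, c1 y j', p) | x y p j j'. (x, y, p) \<in> oedges O1 \<and> j < out_k O2 \<and> j' < out_k O2}
   \<union> {(c2 x i, c2 y i', p) | x y p i i'. (x, y, p) \<in> oedges O2 \<and> i < out_k O1 \<and> i' < out_k O1}
   \<union> {(c0 v, c0 w, [v, w]) | w. w \<in> N}
   \<union> {(c0 v, h, [v]) | h. h \<in> hostP O1 O2 v - {c0 v}}
   \<union> {(h, c0 v, [v]) | h. h \<in> hostP O1 O2 v - {c0 v}}"

definition ulP :: "nodeout \<Rightarrow> nodeout \<Rightarrow> (nat \<times> nat) set" where
  "ulP O1 O2 =
     {(c1 x j, i * out_k O2 + j) | x i j. (x, i) \<in> ulabs O1 \<and> j < out_k O2}
   \<union> {(c2 y i, i * out_k O2 + j) | y i j. (y, j) \<in> ulabs O2 \<and> i < out_k O1}"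

definition prodOut :: "nodeout \<Rightarrow> nodeout \<Rightarrow> nat \<Rightarrow> nat set \<Rightarrow> nodeout" where
  "prodOut O1 O2 v N = \<lparr> out_k = out_k O1 * out_k O2, out_ns = out_k O1 * out_k O2, out_nt = 1,
      hosted = hostP O1 O2 v, ulabs = ulP O1 O2, oedges = edgP O1 O2 v N,
      blabs = {(0, x, y) | x y p. (x, y, p) \<in> edgP O1 O2 v N} \<rparr>"

lemma verts_assemble: "verts (assemble G Ou) = (\<Union>v\<in>verts G. hosted (Ou v))"
  by (simp add: assemble_def)
lemma edges_assemble: "edges (assemble G Ou) = {(x, y). \<exists>v\<in>verts G. \<exists>p. (x, y, p) \<in> oedges (Ou v)}"
  by (simp add: assemble_def)
lemma length_unary_assemble: "length (unary (assemble G Ou)) = out_ns (out_root G Ou)"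
  by (simp add: assemble_def)
lemma unary_assemble: "i < out_ns (out_root G Ou) \<Longrightarrow>
    unary (assemble G Ou) ! i = {x. \<exists>v\<in>verts G. (x, i) \<in> ulabs (Ou v)}"
  by (simp add: assemble_def)
lemma binary_assemble: "binary (assemble G Ou) =
    map (\<lambda>i. {(x, y). \<exists>v\<in>verts G. (i, x, y) \<in> blabs (Ou v)}) [0..<out_nt (out_root G Ou)]"
  by (simp add: assemble_def)

lemma out_root_in: "verts G \<noteq> {} \<Longrightarrow> \<exists>v\<in>verts G. out_root G Ou = Ou v"
  unfolding out_root_def by (metis some_in_eq)

definition decx :: "nat \<Rightarrow> nat" where "decx z = fst (prod_decode (z div 3))"
lemma decx_simps[simp]: "decx (c1 x j) = x" "decx (c2 x j) = x"
proof -
  have "(3 * a + 1) div 3 = a" "(3 * a + 2) div 3 = a" for a :: nat by presburger+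
  then show "decx (c1 x j) = x" "decx (c2 x j) = x" unfolding decx_def c1_def c2_def by simp_all
qed

lemma code_cases:
  fixes z :: nat
  obtains v where "z = c0 v" | x j where "z = c1 x j" | x j where "z = c2 x j"
proof -
  obtain a b where ab: "prod_decode (z div 3) = (a, b)" by (cases "prod_decode (z div 3)")
  have pe: "prod_encode (a, b) = z div 3" using ab by (metis prod_decode_inverse)
  have "z mod 3 = 0 \<or> z mod 3 = 1 \<or> z mod 3 = 2" by presburger
  moreover have "z = 3 * (z div 3) + z mod 3" by presburger
  ultimately consider "z = 3 * (z div 3)" | "z = 3 * (z div 3) + 1" | "z = 3 * (z div 3) + 2"
    by force
  then show ?thesis
  proof cases
    case 1 then show ?thesis using that(1) unfolding c0_def by blast
  next
    case 2 then show ?thesis using that(2) pe unfolding c1_def by metis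
  next
    case 3 then show ?thesis using that(3) pe unfolding c2_def by metis
  qed
qed

locale TR =
  fixes G :: lgraph and O1 O2 :: "nat \<Rightarrow> nodeout" and s1 r1 p1 s2 r2 p2 :: nat
  assumes ok1: "red_output_ok G O1 s1 r1 p1 inst_MIS"
  and ok2: "red_output_ok G O2 s2 r2 p2 inst_MIS"
  and cg: "connected_graph (verts G) (edges G)"
  and noiso: "\<forall>v\<in>verts G. nbrs G v \<noteq> {}"
begin

definition "k1 = out_k (out_root G O1)"
definition "k2 = out_k (out_root G O2)"
definition "G1 = assemble G O1"
definition "G2 = assemble G O2"
definition "Out v = prodOut (O1 v) (O2 v) v (nbrs G v)"
definition "G' = assemble G Out"

lemma V_ne: "verts G \<noteq> {}" using cg unfolding connected_graph_def by blast

lemma inst1: "inst_MIS G1 k1" using okD_inst[OF ok1] unfolding G1_def k1_def .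
lemma inst2: "inst_MIS G2 k2" using okD_inst[OF ok2] unfolding G2_def k2_def .
lemma k1_pos: "1 \<le> k1" using inst1 unfolding inst_MIS_def by blast
lemma k2_pos: "1 \<le> k2" using inst2 unfolding inst_MIS_def by blast

lemma Ok1[simp]: "v \<in> verts G \<Longrightarrow> out_k (O1 v) = k1" using okD_k[OF ok1] unfolding k1_def .
lemma Ok2[simp]: "v \<in> verts G \<Longrightarrow> out_k (O2 v) = k2" using okD_k[OF ok2] unfolding k2_def .

lemma hosted_Out: "v \<in> verts G \<Longrightarrow> hosted (Out v) = {c0 v} \<union> {c1 x j | x j. x \<in> hosted (O1 v) \<and> j < k2}
                      \<union> {c2 y i | y i. y \<in> hosted (O2 v) \<and> i < k1}"
  by (simp add: Out_def prodOut_def hostP_def)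

lemma mem_hosted[simp]:
  "v \<in> verts G \<Longrightarrow> c0 w \<in> hosted (Out v) \<longleftrightarrow> w = v"
  "v \<in> verts G \<Longrightarrow> c1 x j \<in> hosted (Out v) \<longleftrightarrow> x \<in> hosted (O1 v) \<and> j < k2"
  "v \<in> verts G \<Longrightarrow> c2 x j \<in> hosted (Out v) \<longleftrightarrow> x \<in> hosted (O2 v) \<and> j < k1"
  by (auto simp: hosted_Out)

lemma hosted_cases:
  assumes "v \<in> verts G" "z \<in> hosted (Out v)"
  obtains "z = c0 v" | x j where "z = c1 x j" "x \<in> hosted (O1 v)" "j < k2"
    | x i where "z = c2 x i" "x \<in> hosted (O2 v)" "i < k1"
  using assms by (auto simp: hosted_Out)

lemma oedges_Out: "v \<in> verts G \<Longrightarrow> oedges (Out v) =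
     {(c1 x j, c1 y j', p) | x y p j j'. (x, y, p) \<in> oedges (O1 v) \<and> j < k2 \<and> j' < k2}
   \<union> {(c2 x i, c2 y i', p) | x y p i i'. (x, y, p) \<in> oedges (O2 v) \<and> i < k1 \<and> i' < k1}
   \<union> {(c0 v, c0 w, [v, w]) | w. w \<in> nbrs G v}
   \<union> {(c0 v, h, [v]) | h. h \<in> hosted (Out v) - {c0 v}}
   \<union> {(h, c0 v, [v]) | h. h \<in> hosted (Out v) - {c0 v}}"
  by (simp add: Out_def prodOut_def edgP_def hostP_def)

lemma mem_oedges[simp]:
  "v \<in> verts G \<Longrightarrow> (c1 x j, c1 y j', p) \<in> oedges (Out v) \<longleftrightarrow> (x, y, p) \<in> oedges (O1 v) \<and> j < k2 \<and> j' < k2"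
  "v \<in> verts G \<Longrightarrow> (c2 x j, c2 y j', p) \<in> oedges (Out v) \<longleftrightarrow> (x, y, p) \<in> oedges (O2 v) \<and> j < k1 \<and> j' < k1"
  "v \<in> verts G \<Longrightarrow> (c1 x j, c2 y j', p) \<notin> oedges (Out v)"
  "v \<in> verts G \<Longrightarrow> (c2 x j, c1 y j', p) \<notin> oedges (Out v)"
  "v \<in> verts G \<Longrightarrow> (c0 u, c0 w, p) \<in> oedges (Out v) \<longleftrightarrow> u = v \<and> w \<in> nbrs G v \<and> p = [v, w]"
  "v \<in> verts G \<Longrightarrow> (c0 u, c1 x j, p) \<in> oedges (Out v) \<longleftrightarrow> u = v \<and> p = [v] \<and> x \<in> hosted (O1 v) \<and> j < k2"
  "v \<in> verts G \<Longrightarrow> (c0 u, c2 x j, p) \<in> oedges (Out v) \<longleftrightarrow> u = v \<and> p = [v] \<and> x \<in> hosted (O2 v) \<and> j < k1"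
  "v \<in> verts G \<Longrightarrow> (c1 x j, c0 u, p) \<in> oedges (Out v) \<longleftrightarrow> u = v \<and> p = [v] \<and> x \<in> hosted (O1 v) \<and> j < k2"
  "v \<in> verts G \<Longrightarrow> (c2 x j, c0 u, p) \<in> oedges (Out v) \<longleftrightarrow> u = v \<and> p = [v] \<and> x \<in> hosted (O2 v) \<and> j < k1"
  by (auto simp: oedges_Out)


lemma ns1: "out_ns (out_root G O1) = k1"
  using inst1 length_unary_assemble[of G O1] unfolding G1_def inst_MIS_def in_G_def by simp
lemma ns2: "out_ns (out_root G O2) = k2"
  using inst2 length_unary_assemble[of G O2] unfolding G2_def inst_MIS_def in_G_def by simp

lemma unary_G1: "i < k1 \<Longrightarrow> x \<in> unary G1 ! i \<longleftrightarrow> (\<exists>v\<in>verts G. (x, i) \<in> ulabs (O1 v))"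
  using unary_assemble[of i G O1] ns1 unfolding G1_def by simp
lemma unary_G2: "i < k2 \<Longrightarrow> x \<in> unary G2 ! i \<longleftrightarrow> (\<exists>v\<in>verts G. (x, i) \<in> ulabs (O2 v))"
  using unary_assemble[of i G O2] ns2 unfolding G2_def by simp

lemma ul1: "v \<in> verts G \<Longrightarrow> (x, i) \<in> ulabs (O1 v) \<Longrightarrow> x \<in> hosted (O1 v) \<and> i < k1"
  using okD_ul[OF ok1] unfolding k1_def by blast
lemma ul2: "v \<in> verts G \<Longrightarrow> (x, i) \<in> ulabs (O2 v) \<Longrightarrow> x \<in> hosted (O2 v) \<and> i < k2"
  using okD_ul[OF ok2] unfolding k2_def by blast

lemma root_Out: "out_k (out_root G Out) = k1 * k2" "out_ns (out_root G Out) = k1 * k2"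
   "out_nt (out_root G Out) = 1"
  using out_root_in[OF V_ne, of Out] by (auto simp: Out_def prodOut_def)

lemma verts_G1: "x \<in> verts G1 \<longleftrightarrow> (\<exists>v\<in>verts G. x \<in> hosted (O1 v))"
  by (simp add: G1_def verts_assemble)
lemma verts_G2: "x \<in> verts G2 \<longleftrightarrow> (\<exists>v\<in>verts G. x \<in> hosted (O2 v))"
  by (simp add: G2_def verts_assemble)
lemma edges_G1: "(x, y) \<in> edges G1 \<longleftrightarrow> (\<exists>v\<in>verts G. \<exists>p. (x, y, p) \<in> oedges (O1 v))"
  by (simp add: G1_def edges_assemble)
lemma edges_G2: "(x, y) \<in> edges G2 \<longleftrightarrow> (\<exists>v\<in>verts G. \<exists>p. (x, y, p) \<in> oedges (O2 v))"
  by (simp add: G2_def edges_assemble)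

lemma verts_G'[simp]:
  "c0 w \<in> verts G' \<longleftrightarrow> w \<in> verts G"
  "c1 x j \<in> verts G' \<longleftrightarrow> x \<in> verts G1 \<and> j < k2"
  "c2 x j \<in> verts G' \<longleftrightarrow> x \<in> verts G2 \<and> j < k1"
  by (auto simp: G'_def verts_assemble verts_G1 verts_G2)

lemma edges_G'[simp]:
  "(c1 x j, c1 y j') \<in> edges G' \<longleftrightarrow> (x, y) \<in> edges G1 \<and> j < k2 \<and> j' < k2"
  "(c2 x j, c2 y j') \<in> edges G' \<longleftrightarrow> (x, y) \<in> edges G2 \<and> j < k1 \<and> j' < k1"
  "(c1 x j, c2 y j') \<notin> edges G'"
  "(c2 x j, c1 y j') \<notin> edges G'"
  "(c0 u, c0 w) \<in> edges G' \<longleftrightarrow> u \<in> verts G \<and> (u, w) \<in> edges G"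
  "(c0 u, c1 x j) \<in> edges G' \<longleftrightarrow> u \<in> verts G \<and> x \<in> hosted (O1 u) \<and> j < k2"
  "(c0 u, c2 x j) \<in> edges G' \<longleftrightarrow> u \<in> verts G \<and> x \<in> hosted (O2 u) \<and> j < k1"
  "(c1 x j, c0 u) \<in> edges G' \<longleftrightarrow> u \<in> verts G \<and> x \<in> hosted (O1 u) \<and> j < k2"
  "(c2 x j, c0 u) \<in> edges G' \<longleftrightarrow> u \<in> verts G \<and> x \<in> hosted (O2 u) \<and> j < k1"
  by (auto simp: G'_def edges_assemble edges_G1 edges_G2 nbrs_def)

lemma ulabs_Out: "v \<in> verts G \<Longrightarrow> ulabs (Out v) =
     {(c1 x j, i * k2 + j) | x i j. (x, i) \<in> ulabs (O1 v) \<and> j < k2}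
   \<union> {(c2 y i, i * k2 + j) | y i j. (y, j) \<in> ulabs (O2 v) \<and> i < k1}"
  by (simp add: Out_def prodOut_def ulP_def)

lemma unary_G':
  assumes c: "c < k1 * k2"
  shows "c0 w \<notin> unary G' ! c"
    "c1 x j \<in> unary G' ! c \<longleftrightarrow> j < k2 \<and> (\<exists>i<k1. c = i * k2 + j \<and> x \<in> unary G1 ! i)"
    "c2 x i \<in> unary G' ! c \<longleftrightarrow> i < k1 \<and> (\<exists>j<k2. c = i * k2 + j \<and> x \<in> unary G2 ! j)"
proof -
  have U: "z \<in> unary G' ! c \<longleftrightarrow> (\<exists>v\<in>verts G. (z, c) \<in> ulabs (Out v))" for z
    using unary_assemble[of c G Out] root_Out c unfolding G'_def by simp
  show "c0 w \<notin> unary G' ! c" unfolding U by (auto simp: ulabs_Out)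
  show "c1 x j \<in> unary G' ! c \<longleftrightarrow> j < k2 \<and> (\<exists>i<k1. c = i * k2 + j \<and> x \<in> unary G1 ! i)"
    unfolding U using ul1 by (auto simp: ulabs_Out unary_G1)
  show "c2 x i \<in> unary G' ! c \<longleftrightarrow> i < k1 \<and> (\<exists>j<k2. c = i * k2 + j \<and> x \<in> unary G2 ! j)"
    unfolding U using ul2 by (auto simp: ulabs_Out unary_G2)
qed


lemma idx_lt: "i < k1 \<Longrightarrow> j < k2 \<Longrightarrow> i * k2 + j < k1 * k2"
proof -
  assume "i < k1" "j < k2"
  then have "Suc i * k2 \<le> k1 * k2" by (intro mult_le_mono1) simp
  with \<open>j < k2\<close> show ?thesis by simp
qed

lemma cgG: "finite (verts G)" "edges G \<subseteq> verts G \<times> verts G" "sym (edges G)" "irrefl (edges G)"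
  "\<forall>u\<in>verts G. \<forall>w\<in>verts G. (u, w) \<in> (edges G)\<^sup>*"
  using cg unfolding connected_graph_def by auto

lemma cg1: "finite (verts G1)" "irrefl (edges G1)"
  using inst1 unfolding inst_MIS_def in_G_def connected_graph_def by auto
lemma cg2: "finite (verts G2)" "irrefl (edges G2)"
  using inst2 unfolding inst_MIS_def in_G_def connected_graph_def by auto

lemma Out_ks: "v \<in> verts G \<Longrightarrow> out_k (Out v) = k1 * k2 \<and> out_ns (Out v) = k1 * k2 \<and> out_nt (Out v) = 1"
  by (simp add: Out_def prodOut_def)

lemma hosted_disj: "v \<in> verts G \<Longrightarrow> w \<in> verts G \<Longrightarrow> v \<noteq> w \<Longrightarrow> hosted (Out v) \<inter> hosted (Out w) = {}"
proof (rule ccontr)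
  assume a: "v \<in> verts G" "w \<in> verts G" "v \<noteq> w" "hosted (Out v) \<inter> hosted (Out w) \<noteq> {}"
  then obtain z where z: "z \<in> hosted (Out v)" "z \<in> hosted (Out w)" by blast
  have d1: "hosted (O1 v) \<inter> hosted (O1 w) = {}" using okD_disj[OF ok1] a by blast
  have d2: "hosted (O2 v) \<inter> hosted (O2 w) = {}" using okD_disj[OF ok2] a by blast
  show False
    by (rule code_cases[of z]) (use z a d1 d2 in auto)
qed

lemma ul_ok: "v \<in> verts G \<Longrightarrow> (z, c) \<in> ulabs (Out v) \<Longrightarrow> z \<in> hosted (Out v) \<and> c < k1 * k2"
  using ul1 ul2 idx_lt by (auto simp: ulabs_Out)

lemma oe_ok:
  assumes v: "v \<in> verts G" and e: "(a, b, p) \<in> oedges (Out v)"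
  shows "a \<in> hosted (Out v) \<and> length p \<le> Suc (r1 + r2 + 1)
           \<and> (\<forall>q. (a, b, q) \<in> oedges (Out v) \<longrightarrow> q = p)
           \<and> (\<exists>w\<in>verts G. b \<in> hosted (Out w) \<and> (b, a, rev p) \<in> oedges (Out w) \<and> gpath G p v w)"
proof -
  have "(a, b, p) \<in> {(c1 x j, c1 y j', p) | x y p j j'. (x, y, p) \<in> oedges (O1 v) \<and> j < k2 \<and> j' < k2}
   \<union> {(c2 x i, c2 y i', p) | x y p i i'. (x, y, p) \<in> oedges (O2 v) \<and> i < k1 \<and> i' < k1}
   \<union> {(c0 v, c0 w, [v, w]) | w. w \<in> nbrs G v}
   \<union> {(c0 v, h, [v]) | h. h \<in> hosted (Out v) - {c0 v}}
   \<union> {(h, c0 v, [v]) | h. h \<in> hosted (Out v) - {c0 v}}" using e oedges_Out[OF v] by simp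
  then consider
      (A) x y j j' where "a = c1 x j" "b = c1 y j'" "(x, y, p) \<in> oedges (O1 v)" "j < k2" "j' < k2"
    | (B) x y j j' where "a = c2 x j" "b = c2 y j'" "(x, y, p) \<in> oedges (O2 v)" "j < k1" "j' < k1"
    | (C) w where "a = c0 v" "b = c0 w" "p = [v, w]" "w \<in> nbrs G v"
    | (D) "a = c0 v" "b \<in> hosted (Out v)" "b \<noteq> c0 v" "p = [v]"
    | (E) "b = c0 v" "a \<in> hosted (Out v)" "a \<noteq> c0 v" "p = [v]"
    by blast
  then show ?thesis
  proof cases
    case A
    from okD_e[OF ok1 v A(3)] obtain w where
      "x \<in> hosted (O1 v)" "length p \<le> Suc r1" "\<forall>q'. (x, y, q') \<in> oedges (O1 v) \<longrightarrow> q' = p"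
      "w \<in> verts G" "y \<in> hosted (O1 w)" "(y, x, rev p) \<in> oedges (O1 w)" "gpath G p v w" by blast
    note h = this
    have u: "\<forall>q. (a, b, q) \<in> oedges (Out v) \<longrightarrow> q = p" using h(3) A(1,2) v by simp
    have r: "b \<in> hosted (Out w) \<and> (b, a, rev p) \<in> oedges (Out w) \<and> gpath G p v w"
      using h(4-7) A by simp
    show ?thesis using u h(1,2,4) r A(1,4) v by auto
  next
    case B
    from okD_e[OF ok2 v B(3)] obtain w where
      "x \<in> hosted (O2 v)" "length p \<le> Suc r2" "\<forall>q'. (x, y, q') \<in> oedges (O2 v) \<longrightarrow> q' = p"
      "w \<in> verts G" "y \<in> hosted (O2 w)" "(y, x, rev p) \<in> oedges (O2 w)" "gpath G p v w" by blast
    note h = this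
    have u: "\<forall>q. (a, b, q) \<in> oedges (Out v) \<longrightarrow> q = p" using h(3) B(1,2) v by simp
    have r: "b \<in> hosted (Out w) \<and> (b, a, rev p) \<in> oedges (Out w) \<and> gpath G p v w"
      using h(4-7) B by simp
    show ?thesis using u h(1,2,4) r B(1,4) v by auto
  next
    case C
    have vw: "(v, w) \<in> edges G" using C(4) unfolding nbrs_def by simp
    then have w: "w \<in> verts G" and wv: "(w, v) \<in> edges G" and ne: "v \<noteq> w"
      using cgG(2,3,4) unfolding sym_def irrefl_def by auto
    have gp: "gpath G [v, w] v w" using v w vw ne unfolding gpath_def by (auto simp: less_Suc_eq)
    show ?thesis using C v w wv gp by (auto simp: nbrs_def)
  next
    case D
    have u: "(c0 v, b, q) \<in> oedges (Out v) \<Longrightarrow> q = [v]" for q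
      by (rule code_cases[of b]) (use D v in auto)
    have r: "(b, c0 v, [v]) \<in> oedges (Out v)" using D oedges_Out[OF v] by simp
    have gp: "gpath G [v] v v" using v unfolding gpath_def by simp
    show ?thesis using D u r gp v by auto
  next
    case E
    have u: "(a, c0 v, q) \<in> oedges (Out v) \<Longrightarrow> q = [v]" for q
      by (rule code_cases[of a]) (use E v in auto)
    have r: "(c0 v, a, [v]) \<in> oedges (Out v)" using E oedges_Out[OF v] by simp
    have gp: "gpath G [v] v v" using v unfolding gpath_def by simp
    show ?thesis using E u r gp v by auto
  qed
qed


lemma edges_G'_iff: "(a, b) \<in> edges G' \<longleftrightarrow> (\<exists>v\<in>verts G. \<exists>p. (a, b, p) \<in> oedges (Out v))"
  by (simp add: G'_def edges_assemble)
lemma verts_G'_iff: "z \<in> verts G' \<longleftrightarrow> (\<exists>v\<in>verts G. z \<in> hosted (Out v))"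
  by (simp add: G'_def verts_assemble)

lemma G'_sym: "sym (edges G')"
proof (rule symI)
  fix a b assume "(a, b) \<in> edges G'"
  then obtain v p where "v \<in> verts G" "(a, b, p) \<in> oedges (Out v)" unfolding edges_G'_iff by blast
  from oe_ok[OF this] show "(b, a) \<in> edges G'" unfolding edges_G'_iff by blast
qed

lemma G'_sub: "edges G' \<subseteq> verts G' \<times> verts G'"
proof
  fix e assume "e \<in> edges G'"
  then obtain a b where e: "e = (a, b)" "(a, b) \<in> edges G'" by (cases e) auto
  then obtain v p where "v \<in> verts G" "(a, b, p) \<in> oedges (Out v)" unfolding edges_G'_iff by blast
  from oe_ok[OF this] this(1) show "e \<in> verts G' \<times> verts G'" unfolding e by (auto simp: verts_G'_iff)
qed

lemma G'_irrefl: "irrefl (edges G')"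
  unfolding irrefl_def
proof
  fix z show "(z, z) \<notin> edges G'"
    by (rule code_cases[of z]) (use cgG(4) cg1(2) cg2(2) in \<open>auto simp: irrefl_def\<close>)
qed

lemma backbone: "(v, w) \<in> (edges G)\<^sup>* \<Longrightarrow> (c0 v, c0 w) \<in> (edges G')\<^sup>*"
proof (induction rule: rtrancl_induct)
  case base then show ?case by simp
next
  case (step y z)
  then have "y \<in> verts G" using cgG(2) by blast
  with step have "(c0 y, c0 z) \<in> edges G'" by simp
  with step show ?case by (meson rtrancl.rtrancl_into_rtrancl)
qed

lemma to_root: "z \<in> verts G' \<Longrightarrow> \<exists>v\<in>verts G. (z, c0 v) \<in> (edges G')\<^sup>* \<and> (c0 v, z) \<in> (edges G')\<^sup>*"
proof -
  assume "z \<in> verts G'"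
  then obtain v where v: "v \<in> verts G" "z \<in> hosted (Out v)" unfolding verts_G'_iff by blast
  have "z = c0 v \<or> ((z, c0 v) \<in> edges G' \<and> (c0 v, z) \<in> edges G')"
    by (rule hosted_cases[OF v]) (use v in auto)
  then show ?thesis using v by blast
qed

lemma G'_conn: "\<forall>a\<in>verts G'. \<forall>b\<in>verts G'. (a, b) \<in> (edges G')\<^sup>*"
proof (intro ballI)
  fix a b assume "a \<in> verts G'" "b \<in> verts G'"
  from to_root[OF this(1)] to_root[OF this(2)] obtain v w where
    "v \<in> verts G" "w \<in> verts G" "(a, c0 v) \<in> (edges G')\<^sup>*" "(c0 w, b) \<in> (edges G')\<^sup>*" by blast
  moreover have "(c0 v, c0 w) \<in> (edges G')\<^sup>*" using backbone cgG(5) calculation(1,2) by blast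
  ultimately show "(a, b) \<in> (edges G')\<^sup>*" by (meson rtrancl_trans)
qed

lemma verts_G'_sub: "verts G' \<subseteq> c0 ` verts G \<union> (\<lambda>(x, j). c1 x j) ` (verts G1 \<times> {..<k2})
                                  \<union> (\<lambda>(x, i). c2 x i) ` (verts G2 \<times> {..<k1})"
proof
  fix z assume z: "z \<in> verts G'"
  show "z \<in> c0 ` verts G \<union> (\<lambda>(x, j). c1 x j) ` (verts G1 \<times> {..<k2}) \<union> (\<lambda>(x, i). c2 x i) ` (verts G2 \<times> {..<k1})"
    by (rule code_cases[of z]) (use z in force)+
qed

lemma G'_finite: "finite (verts G')"
  by (rule finite_subset[OF verts_G'_sub]) (use cgG(1) cg1(1) cg2(1) in auto)

lemma G'_card: "card (verts G') \<le> card (verts G) + card (verts G1) * k2 + card (verts G2) * k1"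
proof -
  have "card (verts G') \<le> card (c0 ` verts G \<union> (\<lambda>(x, j). c1 x j) ` (verts G1 \<times> {..<k2})
                                  \<union> (\<lambda>(x, i). c2 x i) ` (verts G2 \<times> {..<k1}))"
    by (rule card_mono[OF _ verts_G'_sub]) (use cgG(1) cg1(1) cg2(1) in auto)
  also have "\<dots> \<le> card (c0 ` verts G) + card ((\<lambda>(x, j). c1 x j) ` (verts G1 \<times> {..<k2}))
                  + card ((\<lambda>(x, i). c2 x i) ` (verts G2 \<times> {..<k1}))"
    by (meson add_le_mono card_Un_le le_refl order_trans)
  also have "\<dots> \<le> card (verts G) + card (verts G1 \<times> {..<k2}) + card (verts G2 \<times> {..<k1})"
    by (intro add_le_mono card_image_le) (use cgG(1) cg1(1) cg2(1) in auto)
  finally show ?thesis by (simp add: card_cartesian_product)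
qed


lemma unary_G'_iff: "c < k1 * k2 \<Longrightarrow> z \<in> unary G' ! c \<longleftrightarrow> (\<exists>v\<in>verts G. (z, c) \<in> ulabs (Out v))"
  using unary_assemble[of c G Out] root_Out unfolding G'_def by simp

lemma length_unary_G': "length (unary G') = k1 * k2"
  using length_unary_assemble[of G Out] root_Out unfolding G'_def by simp

lemma binary_G': "binary G' = [edges G']"
proof -
  have "blabs (Out v) = {(0, x, y) | x y p. (x, y, p) \<in> oedges (Out v)}" for v
    by (simp add: Out_def prodOut_def)
  then show ?thesis using binary_assemble[of G Out] root_Out unfolding G'_def
    by (auto simp: edges_assemble)
qed

lemma disj1: "i < k1 \<Longrightarrow> i' < k1 \<Longrightarrow> x \<in> unary G1 ! i \<Longrightarrow> x \<in> unary G1 ! i' \<Longrightarrow> i = i'"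
  using inst1 unfolding inst_MIS_def by blast
lemma disj2: "i < k2 \<Longrightarrow> i' < k2 \<Longrightarrow> x \<in> unary G2 ! i \<Longrightarrow> x \<in> unary G2 ! i' \<Longrightarrow> i = i'"
  using inst2 unfolding inst_MIS_def by blast

lemma G'_disj:
  assumes c: "c < k1 * k2" "c' < k1 * k2" "c \<noteq> c'"
  shows "unary G' ! c \<inter> unary G' ! c' = {}"
proof (rule ccontr)
  assume "unary G' ! c \<inter> unary G' ! c' \<noteq> {}"
  then obtain z where z: "z \<in> unary G' ! c" "z \<in> unary G' ! c'" by blast
  show False
  proof (rule code_cases[of z])
    fix v assume "z = c0 v" then show False using z unary_G'(1)[OF c(1)] by simp
  next
    fix x j assume "z = c1 x j"
    then show False using z unary_G'(2)[OF c(1)] unary_G'(2)[OF c(2)] disj1 c(3) by auto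
  next
    fix x j assume "z = c2 x j"
    then show False using z unary_G'(3)[OF c(1)] unary_G'(3)[OF c(2)] disj2 c(3) by auto
  qed
qed

lemma inst': "inst_MIS G' (k1 * k2)"
proof -
  obtain v0 where v0: "v0 \<in> verts G" using V_ne by blast
  have cgr: "connected_graph (verts G') (edges G')"
    unfolding connected_graph_def using G'_finite G'_sub G'_sym G'_irrefl G'_conn v0
    by (metis empty_iff verts_G'(1))
  have un: "\<forall>P\<in>set (unary G'). P \<subseteq> verts G'"
  proof
    fix P assume "P \<in> set (unary G')"
    then obtain c where c: "c < k1 * k2" "P = unary G' ! c" using length_unary_G' by (metis in_set_conv_nth)
    show "P \<subseteq> verts G'" using ul_ok unfolding c(2) by (auto simp: unary_G'_iff[OF c(1)] verts_G'_iff) blast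
  qed
  have "1 \<le> k1 * k2" using k1_pos k2_pos by simp
  then show ?thesis unfolding inst_MIS_def in_G_def
    using cgr un length_unary_G' binary_G' G'_sub G'_disj by auto
qed

lemma card_V2: "2 \<le> card (verts G)"
proof -
  obtain v where v: "v \<in> verts G" using V_ne by blast
  then obtain w where "(v, w) \<in> edges G" using noiso unfolding nbrs_def by blast
  then have "w \<in> verts G" "v \<noteq> w" using cgG(2,4) unfolding irrefl_def by auto
  then have "{v, w} \<subseteq> verts G" "card {v, w} = 2" using v by auto
  then show ?thesis by (metis card_mono cgG(1))
qed

lemma Out_ok: "red_output_ok G Out (s1 + s2 + p1 + p2 + 2) (r1 + r2 + 1) (p1 * p2 + 1) inst_MIS"
proof -
  have card: "card (verts G') \<le> card (verts G) ^ (s1 + s2 + p1 + p2 + 2)"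
  proof -
    have "card (verts G') \<le> card (verts G) + card (verts G1) * k2 + card (verts G2) * k1" by (rule G'_card)
    also have "\<dots> \<le> card (verts G) ^ (s1 + s2 + p1 + p2 + 2)"
      by (rule card_arith[OF card_V2])
        (use okD_card[OF ok1] okD_card[OF ok2] okD_p[OF ok1] okD_p[OF ok2] in \<open>simp_all add: G1_def G2_def k1_def k2_def\<close>)
    finally show ?thesis .
  qed
  have kp: "k1 * k2 \<le> p1 * p2 + 1"
    using okD_p[OF ok1] okD_p[OF ok2] unfolding k1_def[symmetric] k2_def[symmetric]
    by (simp add: le_SucI mult_le_mono)
  have bl: "\<forall>v\<in>verts G. \<forall>(i, x, y) \<in> blabs (Out v). x \<in> hosted (Out v) \<and> y \<in> verts G' \<and> i < 1"
  proof (intro ballI, clarify)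
    fix v i x y assume v: "v \<in> verts G" and b: "(i, x, y) \<in> blabs (Out v)"
    have "blabs (Out v) = {(0, x, y) | x y p. (x, y, p) \<in> oedges (Out v)}"
      by (simp add: Out_def prodOut_def)
    with b obtain p where "i = 0" "(x, y, p) \<in> oedges (Out v)" by auto
    with oe_ok[OF v this(2)] v show "x \<in> hosted (Out v) \<and> y \<in> verts G' \<and> i < 1"
      by (auto simp: verts_G'_iff)
  qed
  show ?thesis unfolding red_output_ok_def Let_def G'_def[symmetric] root_Out
    using Out_ks hosted_disj ul_ok oe_ok card kp inst' bl by auto
qed


lemma idx_eq: "j < k2 \<Longrightarrow> j' < k2 \<Longrightarrow> i * k2 + j = i' * k2 + j' \<Longrightarrow> i = i' \<and> j = j'"
proof -
  assume a: "j < k2" "j' < k2" "i * k2 + j = i' * k2 + j'"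
  have "(i * k2 + j) div k2 = i" "(i' * k2 + j') div k2 = i'" "(i * k2 + j) mod k2 = j" "(i' * k2 + j') mod k2 = j'"
    using a(1,2) by simp_all
  then show ?thesis using a(3) by (metis (no_types))
qed

lemma dm: "c < k1 * k2 \<Longrightarrow> c div k2 < k1 \<and> c mod k2 < k2 \<and> c = c div k2 * k2 + c mod k2"
  using k2_pos by (auto simp: less_mult_imp_div_less div_mult_mod_eq)

lemma MIS_equiv: "(G', k1 * k2) \<in> MIS \<longleftrightarrow> (G1, k1) \<in> MIS \<or> (G2, k2) \<in> MIS"
proof
  assume "(G1, k1) \<in> MIS \<or> (G2, k2) \<in> MIS"
  then show "(G', k1 * k2) \<in> MIS"
  proof
    assume "(G1, k1) \<in> MIS"
    then obtain f where f: "\<forall>i<k1. f i \<in> unary G1 ! i" "\<forall>i<k1. \<forall>j<k1. i \<noteq> j \<longrightarrow> (f i, f j) \<notin> edges G1"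
      unfolding MIS_def by blast
    define F where "F c = c1 (f (c div k2)) (c mod k2)" for c
    have "\<forall>c<k1 * k2. F c \<in> unary G' ! c"
    proof (intro allI impI)
      fix c assume c: "c < k1 * k2"
      show "F c \<in> unary G' ! c" unfolding F_def unary_G'(2)[OF c] using dm[OF c] f(1) by metis
    qed
    moreover have "\<forall>c<k1 * k2. \<forall>c'<k1 * k2. c \<noteq> c' \<longrightarrow> (F c, F c') \<notin> edges G'"
    proof (intro allI impI)
      fix c c' assume c: "c < k1 * k2" "c' < k1 * k2" "c \<noteq> c'"
      show "(F c, F c') \<notin> edges G'"
      proof (cases "c div k2 = c' div k2")
        case True then show ?thesis using cg1(2) unfolding F_def irrefl_def by simp
      next
        case False then show ?thesis using f(2) dm[OF c(1)] dm[OF c(2)] unfolding F_def by simp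
      qed
    qed
    ultimately show ?thesis unfolding MIS_def using inst' by blast
  next
    assume "(G2, k2) \<in> MIS"
    then obtain g where g: "\<forall>i<k2. g i \<in> unary G2 ! i" "\<forall>i<k2. \<forall>j<k2. i \<noteq> j \<longrightarrow> (g i, g j) \<notin> edges G2"
      unfolding MIS_def by blast
    define F where "F c = c2 (g (c mod k2)) (c div k2)" for c
    have "\<forall>c<k1 * k2. F c \<in> unary G' ! c"
    proof (intro allI impI)
      fix c assume c: "c < k1 * k2"
      show "F c \<in> unary G' ! c" unfolding F_def unary_G'(3)[OF c] using dm[OF c] g(1) by metis
    qed
    moreover have "\<forall>c<k1 * k2. \<forall>c'<k1 * k2. c \<noteq> c' \<longrightarrow> (F c, F c') \<notin> edges G'"
    proof (intro allI impI)
      fix c c' assume c: "c < k1 * k2" "c' < k1 * k2" "c \<noteq> c'"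
      show "(F c, F c') \<notin> edges G'"
      proof (cases "c mod k2 = c' mod k2")
        case True then show ?thesis using cg2(2) unfolding F_def irrefl_def by simp
      next
        case False then show ?thesis using g(2) dm[OF c(1)] dm[OF c(2)] unfolding F_def by simp
      qed
    qed
    ultimately show ?thesis unfolding MIS_def using inst' by blast
  qed
next
  assume "(G', k1 * k2) \<in> MIS"
  then obtain F where F: "\<forall>c<k1 * k2. F c \<in> unary G' ! c"
      "\<forall>c<k1 * k2. \<forall>c'<k1 * k2. c \<noteq> c' \<longrightarrow> (F c, F c') \<notin> edges G'"
    unfolding MIS_def by blast
  have side: "(\<exists>x. F (i * k2 + j) = c1 x j \<and> x \<in> unary G1 ! i) \<or> (\<exists>y. F (i * k2 + j) = c2 y i \<and> y \<in> unary G2 ! j)"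
    if ij: "i < k1" "j < k2" for i j
  proof -
    have c: "i * k2 + j < k1 * k2" using idx_lt ij .
    have m: "F (i * k2 + j) \<in> unary G' ! (i * k2 + j)" using F(1) c by blast
    show ?thesis
    proof (rule code_cases[of "F (i * k2 + j)"])
      fix v assume "F (i * k2 + j) = c0 v" then show ?thesis using m unary_G'(1)[OF c] by simp
    next
      fix x j' assume e: "F (i * k2 + j) = c1 x j'"
      then obtain i' where "j' < k2" "i' < k1" "i * k2 + j = i' * k2 + j'" "x \<in> unary G1 ! i'"
        using m unary_G'(2)[OF c] by auto
      then show ?thesis using e idx_eq ij by metis
    next
      fix x i' assume e: "F (i * k2 + j) = c2 x i'"
      then obtain j' where "i' < k1" "j' < k2" "i * k2 + j = i' * k2 + j'" "x \<in> unary G2 ! j'"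
        using m unary_G'(3)[OF c] by auto
      then show ?thesis using e idx_eq ij by metis
    qed
  qed
  show "(G1, k1) \<in> MIS \<or> (G2, k2) \<in> MIS"
  proof (cases "\<forall>i<k1. \<exists>j<k2. \<exists>x. F (i * k2 + j) = c1 x j \<and> x \<in> unary G1 ! i")
    case True
    then obtain J where J: "\<forall>i<k1. J i < k2 \<and> F (i * k2 + J i) = c1 (decx (F (i * k2 + J i))) (J i)
                  \<and> decx (F (i * k2 + J i)) \<in> unary G1 ! i"
      by (metis decx_simps(1))
    define f where "f i = decx (F (i * k2 + J i))" for i
    have "\<forall>i<k1. \<forall>i'<k1. i \<noteq> i' \<longrightarrow> (f i, f i') \<notin> edges G1"
    proof (intro allI impI)
      fix i i' assume ii: "i < k1" "i' < k1" "i \<noteq> i'"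
      have "i * k2 + J i \<noteq> i' * k2 + J i'" using idx_eq J ii by metis
      then have "(F (i * k2 + J i), F (i' * k2 + J i')) \<notin> edges G'"
        using F(2) idx_lt J ii by blast
      then show "(f i, f i') \<notin> edges G1" using J ii unfolding f_def by (metis edges_G'(1))
    qed
    then have "(G1, k1) \<in> MIS" unfolding MIS_def using inst1 J f_def by auto
    then show ?thesis ..
  next
    case False
    then obtain i where i: "i < k1" "\<forall>j<k2. \<not> (\<exists>x. F (i * k2 + j) = c1 x j \<and> x \<in> unary G1 ! i)" by blast
    then have S: "\<forall>j<k2. F (i * k2 + j) = c2 (decx (F (i * k2 + j))) i \<and> decx (F (i * k2 + j)) \<in> unary G2 ! j"
      using side by (metis decx_simps(2))
    define g where "g j = decx (F (i * k2 + j))" for j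
    have "\<forall>j<k2. \<forall>j'<k2. j \<noteq> j' \<longrightarrow> (g j, g j') \<notin> edges G2"
    proof (intro allI impI)
      fix j j' assume jj: "j < k2" "j' < k2" "j \<noteq> j'"
      have "i * k2 + j \<noteq> i * k2 + j'" using jj by simp
      then have "(F (i * k2 + j), F (i * k2 + j')) \<notin> edges G'"
        using F(2) idx_lt i jj by blast
      then show "(g j, g j') \<notin> edges G2" using S jj i unfolding g_def by (metis edges_G'(2))
    qed
    then have "(G2, k2) \<in> MIS" unfolding MIS_def using inst2 S g_def by auto
    then show ?thesis ..
  qed
qed

end

lemma out_root_cong: "verts G \<noteq> {} \<Longrightarrow> \<forall>v\<in>verts G. Ou v = Ou' v \<Longrightarrow> out_root G Ou = out_root G Ou'"
  unfolding out_root_def by (metis some_in_eq)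

lemma assemble_cong: "verts G \<noteq> {} \<Longrightarrow> \<forall>v\<in>verts G. Ou v = Ou' v \<Longrightarrow> assemble G Ou = assemble G Ou'"
  using out_root_cong[of G Ou Ou'] unfolding assemble_def by auto

lemma red_ok_cong: "verts G \<noteq> {} \<Longrightarrow> \<forall>v\<in>verts G. Ou v = Ou' v \<Longrightarrow>
    red_output_ok G Ou a b c Q \<longleftrightarrow> red_output_ok G Ou' a b c Q"
  unfolding red_output_ok_def Let_def
  using out_root_cong[of G Ou Ou'] assemble_cong[of G Ou Ou'] by (simp cong: ball_cong bex_cong)

definition Hv :: "nat \<Rightarrow> lgraph" where
  "Hv v = \<lparr> verts = {v}, edges = {}, unary = [], binary = [] \<rparr>"

definition isoOut :: "nat \<Rightarrow> bool \<Rightarrow> nodeout" where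
  "isoOut v b = \<lparr> out_k = 1, out_ns = 1, out_nt = 1, hosted = {c0 v},
     ulabs = (if b then {(c0 v, 0)} else {}), oedges = {}, blabs = {} \<rparr>"

definition newA :: "(lgraph \<Rightarrow> nat \<Rightarrow> nat \<Rightarrow> nodeout) \<Rightarrow> (lgraph \<Rightarrow> nat \<Rightarrow> nat \<Rightarrow> nodeout)
     \<Rightarrow> lgraph \<Rightarrow> nat \<Rightarrow> nat \<Rightarrow> nodeout" where
  "newA A1 A2 G k v = (if nbrs G v = {}
     then isoOut v ((assemble (Hv v) (\<lambda>_. A1 G k v), out_k (A1 G k v)) \<in> MIS
                   \<or> (assemble (Hv v) (\<lambda>_. A2 G k v), out_k (A2 G k v)) \<in> MIS)
     else prodOut (A1 G k v) (A2 G k v) v (nbrs G v))"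

lemma iso_verts:
  assumes "connected_graph (verts G) (edges G)" "v \<in> verts G" "nbrs G v = {}"
  shows "verts G = {v}"
proof -
  have "w = v" if w: "w \<in> verts G" for w
  proof -
    have "(v, w) \<in> (edges G)\<^sup>*" using assms(1,2) w unfolding connected_graph_def by blast
    then show ?thesis
      by (cases rule: converse_rtranclE) (use assms(3) in \<open>auto simp: nbrs_def\<close>)
  qed
  then show ?thesis using assms(2) by blast
qed

lemma iso_ok:
  assumes V: "verts G = {v}" and O: "Ou v = isoOut v b" and p: "1 \<le> p"
  shows "red_output_ok G Ou sz r p inst_MIS"
    and "(assemble G Ou, out_k (out_root G Ou)) \<in> MIS \<longleftrightarrow> b"
proof -
  have R: "out_root G Ou = isoOut v b" unfolding out_root_def V using O by simp
  have A: "assemble G Ou = \<lparr> verts = {c0 v}, edges = {}, unary = [if b then {c0 v} else {}], binary = [{}] \<rparr>"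
    unfolding assemble_def R V using O by (auto simp: isoOut_def)
  have cgr: "connected_graph {c0 v} {}" unfolding connected_graph_def by (simp add: sym_def irrefl_def)
  have I: "inst_MIS (assemble G Ou) 1" unfolding A inst_MIS_def in_G_def using cgr by auto
  show "red_output_ok G Ou sz r p inst_MIS"
    unfolding red_output_ok_def Let_def R using I A O V p by (auto simp: isoOut_def)
  show "(assemble G Ou, out_k (out_root G Ou)) \<in> MIS \<longleftrightarrow> b"
    unfolding R using I unfolding MIS_def by (auto simp: isoOut_def A)
qed

lemma relpow_eq:
  assumes sv: "\<forall>u \<in> gball G1 v r. init_info G1 u = init_info G2 u"
  shows "n \<le> r \<Longrightarrow> {u. (v, u) \<in> edges G1 ^^ n} = {u. (v, u) \<in> edges G2 ^^ n}"
proof (induction n)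
  case 0 then show ?case by simp
next
  case (Suc n)
  have IH: "(v, w) \<in> edges G1 ^^ n \<longleftrightarrow> (v, w) \<in> edges G2 ^^ n" for w using Suc by auto
  have nb: "(v, w) \<in> edges G1 ^^ n \<Longrightarrow> nbrs G1 w = nbrs G2 w" for w
  proof -
    assume "(v, w) \<in> edges G1 ^^ n"
    moreover have "n \<le> r" using Suc(2) by simp
    ultimately have "w \<in> gball G1 v r" unfolding gball_def by blast
    then show ?thesis using sv unfolding init_info_def by auto
  qed
  show ?case
  proof (rule set_eqI)
    fix u
    have "(v, u) \<in> edges G1 ^^ Suc n \<longleftrightarrow> (\<exists>w. (v, w) \<in> edges G1 ^^ n \<and> (w, u) \<in> edges G1)" by auto
    also have "\<dots> \<longleftrightarrow> (\<exists>w. (v, w) \<in> edges G2 ^^ n \<and> (w, u) \<in> edges G2)"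
      using IH nb unfolding nbrs_def by blast
    also have "\<dots> \<longleftrightarrow> (v, u) \<in> edges G2 ^^ Suc n" by auto
    finally show "u \<in> {u. (v, u) \<in> edges G1 ^^ Suc n} \<longleftrightarrow> u \<in> {u. (v, u) \<in> edges G2 ^^ Suc n}" by simp
  qed
qed

lemma same_view_mono: "same_view G1 G2 v r \<Longrightarrow> m \<le> r \<Longrightarrow> same_view G1 G2 v m"
proof -
  assume sv: "same_view G1 G2 v r" and m: "m \<le> r"
  have I: "\<forall>u \<in> gball G1 v r. init_info G1 u = init_info G2 u" using sv unfolding same_view_def by blast
  have "gball G1 v m = gball G2 v m"
    unfolding gball_def using relpow_eq[OF I] m by (auto; metis (mono_tags, lifting) le_trans mem_Collect_eq)
  moreover have "gball G1 v m \<subseteq> gball G1 v r" unfolding gball_def using m le_trans by blast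
  ultimately show ?thesis using I unfolding same_view_def by blast
qed

lemma in_gball: "v \<in> gball G v r" unfolding gball_def by auto

lemma computable_ext: "computable f \<Longrightarrow> (\<And>n. g n = f n) \<Longrightarrow> computable g"
proof -
  assume "computable f" "\<And>n. g n = f n"
  then have "g = f" by auto
  with \<open>computable f\<close> show ?thesis by simp
qed

theorem mainTheorem12:
  fixes s t :: nat and P1 P2 :: problem
  assumes "P1 \<subseteq> {(G, k). in_G s t G}"
      and "P2 \<subseteq> {(G, k). in_G s t G}"
      and "local_reduction s t P1 inst_MIS MIS"
      and "local_reduction s t P2 inst_MIS MIS"
  shows "local_reduction s t (P1 \<union> P2) inst_MIS MIS"
proof -
  from assms(3) obtain sz1 r1 rd1 p1 A1 where
    c1: "computable sz1" "computable r1" "computable rd1" "computable p1" and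
    loc1: "\<forall>G1 G2 k v. in_G s t G1 \<and> in_G s t G2 \<and> v \<in> verts G1 \<and> same_view G1 G2 v (rd1 k)
               \<longrightarrow> A1 G1 k v = A1 G2 k v" and
    cor1: "\<forall>G k. in_G s t G \<longrightarrow>
               red_output_ok G (A1 G k) (sz1 k) (r1 k) (p1 k) inst_MIS
             \<and> ((G, k) \<in> P1 \<longleftrightarrow> (assemble G (A1 G k), out_k (out_root G (A1 G k))) \<in> MIS)"
    unfolding local_reduction_def by blast
  from assms(4) obtain sz2 r2 rd2 p2 A2 where
    c2: "computable sz2" "computable r2" "computable rd2" "computable p2" and
    loc2: "\<forall>G1 G2 k v. in_G s t G1 \<and> in_G s t G2 \<and> v \<in> verts G1 \<and> same_view G1 G2 v (rd2 k)
               \<longrightarrow> A2 G1 k v = A2 G2 k v" and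
    cor2: "\<forall>G k. in_G s t G \<longrightarrow>
               red_output_ok G (A2 G k) (sz2 k) (r2 k) (p2 k) inst_MIS
             \<and> ((G, k) \<in> P2 \<longleftrightarrow> (assemble G (A2 G k), out_k (out_root G (A2 G k))) \<in> MIS)"
    unfolding local_reduction_def by blast
  let ?sz = "\<lambda>k. sz1 k + sz2 k + p1 k + p2 k + 2"
  let ?r = "\<lambda>k. r1 k + r2 k + 1"
  let ?rd = "\<lambda>k. rd1 k + rd2 k + 1"
  let ?p = "\<lambda>k. p1 k * p2 k + 1"
  have csz: "computable ?sz"
    by (rule computable_ext[OF computable_Suc[OF computable_Suc[OF
          computable_add[OF computable_add[OF computable_add[OF c1(1) c2(1)] c1(4)] c2(4)]]]]) simp
  have cr: "computable ?r"
    by (rule computable_ext[OF computable_Suc[OF computable_add[OF c1(2) c2(2)]]]) simp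
  have crd: "computable ?rd"
    by (rule computable_ext[OF computable_Suc[OF computable_add[OF c1(3) c2(3)]]]) simp
  have cp: "computable ?p"
    by (rule computable_ext[OF computable_Suc[OF computable_mult[OF c1(4) c2(4)]]]) simp
  let ?A = "newA A1 A2"
  have loc: "\<forall>G1 G2 k v. in_G s t G1 \<and> in_G s t G2 \<and> v \<in> verts G1 \<and> same_view G1 G2 v (?rd k)
               \<longrightarrow> ?A G1 k v = ?A G2 k v"
  proof (intro allI impI, elim conjE)
    fix G1 G2 k v assume g: "in_G s t G1" "in_G s t G2" "v \<in> verts G1" and sv: "same_view G1 G2 v (?rd k)"
    have e1: "A1 G1 k v = A1 G2 k v" using loc1 g same_view_mono[OF sv, of "rd1 k"] by simp
    have e2: "A2 G1 k v = A2 G2 k v" using loc2 g same_view_mono[OF sv, of "rd2 k"] by simp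
    have "init_info G1 v = init_info G2 v" using sv in_gball unfolding same_view_def by blast
    then have e3: "nbrs G1 v = nbrs G2 v" unfolding init_info_def by simp
    show "?A G1 k v = ?A G2 k v" unfolding newA_def e1 e2 e3 ..
  qed
  have cor: "\<forall>G k. in_G s t G \<longrightarrow>
               red_output_ok G (?A G k) (?sz k) (?r k) (?p k) inst_MIS
             \<and> ((G, k) \<in> P1 \<union> P2 \<longleftrightarrow> (assemble G (?A G k), out_k (out_root G (?A G k))) \<in> MIS)"
  proof (intro allI impI)
    fix G k assume g: "in_G s t G"
    have cg: "connected_graph (verts G) (edges G)" using g unfolding in_G_def by blast
    have Vne: "verts G \<noteq> {}" using cg unfolding connected_graph_def by blast
    have ok1: "red_output_ok G (A1 G k) (sz1 k) (r1 k) (p1 k) inst_MIS" using cor1 g by blast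
    have ok2: "red_output_ok G (A2 G k) (sz2 k) (r2 k) (p2 k) inst_MIS" using cor2 g by blast
    have iff1: "(G, k) \<in> P1 \<longleftrightarrow> (assemble G (A1 G k), out_k (out_root G (A1 G k))) \<in> MIS" using cor1 g by blast
    have iff2: "(G, k) \<in> P2 \<longleftrightarrow> (assemble G (A2 G k), out_k (out_root G (A2 G k))) \<in> MIS" using cor2 g by blast
    show "red_output_ok G (?A G k) (?sz k) (?r k) (?p k) inst_MIS
             \<and> ((G, k) \<in> P1 \<union> P2 \<longleftrightarrow> (assemble G (?A G k), out_k (out_root G (?A G k))) \<in> MIS)"
    proof (cases "\<exists>v\<in>verts G. nbrs G v = {}")
      case True
      then obtain v where v: "v \<in> verts G" "nbrs G v = {}" by blast
      have V: "verts G = {v}" by (rule iso_verts[OF cg v])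
      define b where "b = ((assemble (Hv v) (\<lambda>_. A1 G k v), out_k (A1 G k v)) \<in> MIS
                   \<or> (assemble (Hv v) (\<lambda>_. A2 G k v), out_k (A2 G k v)) \<in> MIS)"
      have Av: "?A G k v = isoOut v b" unfolding newA_def b_def using v by simp
      have rt: "out_root G Ou = Ou v" "out_root (Hv v) Ou = Ou v" for Ou
        unfolding out_root_def V by (simp_all add: Hv_def)
      have as: "assemble G Ou = assemble (Hv v) (\<lambda>_. Ou v)" for Ou
        unfolding assemble_def rt V by (simp add: Hv_def)
      have b: "b \<longleftrightarrow> (G, k) \<in> P1 \<union> P2" unfolding b_def iff1 iff2 Un_iff rt as[of "A1 G k"] as[of "A2 G k"] ..
      have "1 \<le> ?p k" by simp
      then show ?thesis using iso_ok(1)[where Ou="?A G k" and sz="?sz k" and r="?r k" and p="?p k", OF V Av]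
          iso_ok(2)[where Ou="?A G k" and p=1, OF V Av] b by simp
    next
      case False
      then have ni: "\<forall>v\<in>verts G. nbrs G v \<noteq> {}" by blast
      interpret T: TR G "A1 G k" "A2 G k" "sz1 k" "r1 k" "p1 k" "sz2 k" "r2 k" "p2 k"
        using ok1 ok2 cg ni by unfold_locales
      have eq: "\<forall>v\<in>verts G. ?A G k v = T.Out v" unfolding newA_def T.Out_def using ni by simp
      have "red_output_ok G (?A G k) (?sz k) (?r k) (?p k) inst_MIS"
        using T.Out_ok red_ok_cong[OF Vne eq] by simp
      moreover have "assemble G (?A G k) = T.G'" unfolding T.G'_def using assemble_cong[OF Vne eq] .
      moreover have "out_k (out_root G (?A G k)) = T.k1 * T.k2" using out_root_cong[OF Vne eq] T.root_Out by simp
      ultimately show ?thesis using T.MIS_equiv iff1 iff2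
        unfolding T.G1_def T.G2_def T.k1_def T.k2_def by simp
    qed
  qed
  show ?thesis unfolding local_reduction_def
    using csz cr crd cp loc cor by blast
qed

end
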